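(* Let $1\le n\le m$ and, for each unit vector $\mathbf{k}\in S^2\subset\mathbb{R}^3$, let $Q(\mathbf{k})$ be a real $n\times m$ matrix and $R(\mathbf{k})$ a real $m\times n$ matrix, both depending smoothly on $\mathbf{k}$. Define the $(n+m)\times(n+m)$ matrix $$P(\mathbf{k})=\begin{pmatrix}0 & Q(\mathbf{k})\\ R(\mathbf{k}) & 0\end{pmatrix}$$ and the $n\times n$ matrix $M(\mathbf{k}):=Q(\mathbf{k})R(\mathbf{k})$. (a) Fix $\mathbf{k}$. If $M(\mathbf{k})$ is diagonalizable and all its eigenvalues $0<\mu_1<\mu_2<\dots<\mu_l$ are strictly positive, then $P(\mathbf{k})$ is diagonalizable and all its eigenvalues are real and belong to the set $\{0\}\cup\{\pm\sqrt{\mu_j}: j=1,\dots,l\}$. (b) Suppose there exists a family of real symmetric positive-definite $n\times n$ matrices $H_1(\mathbf{k})$, depending smoothly on $\mathbf{k}\in S^2$, such that for all $\mathbf{k}\in S^2$ the matrix $H_1(\mathbf{k})M(\mathbf{k})$ is symmetric (i.e. $H_1(\mathbf{k})M(\mathbf{k})=M(\mathbf{k})^TH_1(\mathbf{k})$) and positive definite. Then there exists a family of real symmetric positive-definite $(n+m)\times(n+m)$ matrices $H(\mathbf{k})$, depending smoothly on $\mathbf{k}\in S^2$, such that $H(\mathbf{k})P(\mathbf{k})=P(\mathbf{k})^TH(\mathbf{k})$ for all $\mathbf{k}\in S^2$ (so that $P$ is strongly hyperbolic in the sense defined in the context).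
   Context: A family of matrices $P(\mathbf{k})$, $\mathbf{k}\in S^2$, is called strongly hyperbolic if there exists a family of symmetric positive-definite matrices $H(\mathbf{k})$ depending smoothly on $\mathbf{k}\in S^2$ such that $H(\mathbf{k})P(\mathbf{k})=P(\mathbf{k})^TH(\mathbf{k})$ for all $\mathbf{k}\in S^2$; if $H$ can be chosen independent of $\mathbf{k}$, it is called symmetric hyperbolic. *)

theory Defs
  imports "HOL-Analysis.Analysis" "Jordan_Normal_Form.Jordan_Normal_Form"
begin

fun Ck_on :: "nat \<Rightarrow> 'a::euclidean_space set \<Rightarrow> ('a \<Rightarrow> real) \<Rightarrow> bool" where
  "Ck_on 0 U f = continuous_on U f"
| "Ck_on (Suc j) U f = (continuous_on U f \<and>
     (\<forall>b\<in>Basis. \<exists>g. (\<forall>x\<in>U. ((\<lambda>t. f (x + t *\<^sub>R b)) has_real_derivative g x) (at 0))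
                     \<and> Ck_on j U g))"

text \<open>f is smooth (C^infinity) on the set S: it is the restriction to S of a function that is
  C^infinity on an open neighbourhood of S (standard notion for a submanifold such as S^2).\<close>
definition smooth_on :: "'a::euclidean_space set \<Rightarrow> ('a \<Rightarrow> real) \<Rightarrow> bool" where
  "smooth_on S f = (\<exists>U g. open U \<and> S \<subseteq> U \<and> (\<forall>j. Ck_on j U g) \<and> (\<forall>x\<in>S. g x = f x))"

definition smooth_mat_on :: "'a::euclidean_space set \<Rightarrow> nat \<Rightarrow> nat \<Rightarrow> ('a \<Rightarrow> real mat) \<Rightarrow> bool" where
  "smooth_mat_on S r c A = ((\<forall>k\<in>S. A k \<in> carrier_mat r c) \<and>
     (\<forall>i<r. \<forall>j<c. smooth_on S (\<lambda>k. A k $$ (i,j))))"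

definition diagonalizable :: "'a::field mat \<Rightarrow> bool" where
  "diagonalizable A = (\<exists>B. similar_mat A B \<and> diagonal_mat B)"

definition symmetric_mat :: "'a mat \<Rightarrow> bool" where
  "symmetric_mat A = (transpose_mat A = A)"

definition pos_def_mat :: "nat \<Rightarrow> real mat \<Rightarrow> bool" where
  "pos_def_mat n A = (A \<in> carrier_mat n n \<and> symmetric_mat A \<and>
     (\<forall>v\<in>carrier_vec n. v \<noteq> 0\<^sub>v n \<longrightarrow> scalar_prod v (mult_mat_vec A v) > 0))"

definition block_P :: "nat \<Rightarrow> nat \<Rightarrow> 'a::zero mat \<Rightarrow> 'a mat \<Rightarrow> 'a mat" where
  "block_P n m Q R = four_block_mat (0\<^sub>m n n) Q R (0\<^sub>m m m)"

definition S2 :: "(real \<times> real \<times> real) set" where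
  "S2 = sphere 0 1"

end

theory Submission
  imports Defs "Jordan_Normal_Form.Jordan_Normal_Form_Uniqueness" "Jordan_Normal_Form.Jordan_Normal_Form_Existence"
begin

lemma Ck_on_subset: "Ck_on j U f \<Longrightarrow> V \<subseteq> U \<Longrightarrow> Ck_on j V f"
proof (induction j arbitrary: f)
  case 0 then show ?case using continuous_on_subset by auto
next
  case (Suc j)
  have "continuous_on V f" using Suc.prems continuous_on_subset by auto
  moreover have "\<forall>b\<in>Basis. \<exists>g. (\<forall>x\<in>V. ((\<lambda>t. f (x + t *\<^sub>R b)) has_real_derivative g x) (at 0)) \<and> Ck_on j V g"
  proof
    fix b :: 'a assume "b \<in> Basis"
    then obtain g where "\<forall>x\<in>U. ((\<lambda>t. f (x + t *\<^sub>R b)) has_real_derivative g x) (at 0)" "Ck_on j U g"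
      using Suc.prems by auto
    then show "\<exists>g. (\<forall>x\<in>V. ((\<lambda>t. f (x + t *\<^sub>R b)) has_real_derivative g x) (at 0)) \<and> Ck_on j V g"
      using Suc.IH Suc.prems(2) by blast
  qed
  ultimately show ?case by simp
qed

lemma Ck_on_Suc_imp: "Ck_on (Suc j) U f \<Longrightarrow> Ck_on j U f"
proof (induction j arbitrary: f)
  case 0 then show ?case by auto
next
  case (Suc j) then show ?case by (auto) blast
qed

lemma Ck_on_const: "Ck_on j U (\<lambda>x. c)"
proof (induction j arbitrary: c)
  case 0 then show ?case by auto
next
  case (Suc j) then show ?case by (auto intro!: exI[of _ "\<lambda>x. 0"])
qed

lemma Ck_on_add: "Ck_on j U f \<Longrightarrow> Ck_on j U g \<Longrightarrow> Ck_on j U (\<lambda>x. f x + g x)"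
proof (induction j arbitrary: f g)
  case 0 then show ?case by (auto intro: continuous_on_add)
next
  case (Suc j)
  show ?case
  proof (simp, intro conjI ballI)
    show "continuous_on U (\<lambda>x. f x + g x)" using Suc.prems by (auto intro: continuous_on_add)
    fix b :: 'a assume b: "b \<in> Basis"
    obtain f' where f': "\<forall>x\<in>U. ((\<lambda>t. f (x + t *\<^sub>R b)) has_real_derivative f' x) (at 0)" "Ck_on j U f'"
      using Suc.prems(1) b by auto
    obtain g' where g': "\<forall>x\<in>U. ((\<lambda>t. g (x + t *\<^sub>R b)) has_real_derivative g' x) (at 0)" "Ck_on j U g'"
      using Suc.prems(2) b by auto
    show "\<exists>h. (\<forall>x\<in>U. ((\<lambda>t. f (x + t *\<^sub>R b) + g (x + t *\<^sub>R b)) has_real_derivative h x) (at 0)) \<and> Ck_on j U h"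
      by (rule exI[of _ "\<lambda>x. f' x + g' x"]) (use f' g' Suc.IH in \<open>auto intro: derivative_intros\<close>)
  qed
qed

lemma Ck_on_mult: "Ck_on j U f \<Longrightarrow> Ck_on j U g \<Longrightarrow> Ck_on j U (\<lambda>x. f x * g x)"
proof (induction j arbitrary: f g)
  case 0 then show ?case by (auto intro: continuous_on_mult)
next
  case (Suc j)
  show ?case
  proof (simp, intro conjI ballI)
    show "continuous_on U (\<lambda>x. f x * g x)" using Suc.prems by (auto intro: continuous_on_mult)
    fix b :: 'a assume b: "b \<in> Basis"
    obtain f' where f': "\<forall>x\<in>U. ((\<lambda>t. f (x + t *\<^sub>R b)) has_real_derivative f' x) (at 0)" "Ck_on j U f'"
      using Suc.prems(1) b by auto
    obtain g' where g': "\<forall>x\<in>U. ((\<lambda>t. g (x + t *\<^sub>R b)) has_real_derivative g' x) (at 0)" "Ck_on j U g'"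
      using Suc.prems(2) b by auto
    have fj: "Ck_on j U f" "Ck_on j U g" using Suc.prems Ck_on_Suc_imp by blast+
    have "Ck_on j U (\<lambda>x. f' x * g x + f x * g' x)"
      by (rule Ck_on_add; rule Suc.IH) (use fj f' g' in auto)
    moreover have "\<forall>x\<in>U. ((\<lambda>t. f (x + t *\<^sub>R b) * g (x + t *\<^sub>R b)) has_real_derivative (f' x * g x + f x * g' x)) (at 0)"
    proof
      fix x assume x: "x \<in> U"
      have "((\<lambda>t. f (x + t *\<^sub>R b) * g (x + t *\<^sub>R b)) has_real_derivative
          (f' x * g (x + 0 *\<^sub>R b) + f' x * 0 + f (x + 0 *\<^sub>R b) * g' x)) (at 0)"
        using DERIV_mult'[OF f'(1)[rule_format, OF x] g'(1)[rule_format, OF x]] by (simp add: algebra_simps)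
      then show "((\<lambda>t. f (x + t *\<^sub>R b) * g (x + t *\<^sub>R b)) has_real_derivative (f' x * g x + f x * g' x)) (at 0)"
        by simp
    qed
    ultimately show "\<exists>h. (\<forall>x\<in>U. ((\<lambda>t. f (x + t *\<^sub>R b) * g (x + t *\<^sub>R b)) has_real_derivative h x) (at 0)) \<and> Ck_on j U h"
      by (intro exI[of _ "\<lambda>x. f' x * g x + f x * g' x"]) simp
  qed
qed

lemma smooth_on_const: "smooth_on S (\<lambda>x. c)"
  unfolding smooth_on_def by (rule exI[of _ UNIV], rule exI[of _ "\<lambda>x. c"]) (auto intro: Ck_on_const)

lemma smooth_on_cong: "smooth_on S f \<Longrightarrow> (\<And>x. x \<in> S \<Longrightarrow> f x = g x) \<Longrightarrow> smooth_on S g"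
  unfolding smooth_on_def by metis

lemma smooth_on_binop:
  fixes f g :: "'a::euclidean_space \<Rightarrow> real"
  assumes "smooth_on S f" "smooth_on S g"
    and op: "\<And>j (U::'a set) f g. Ck_on j U f \<Longrightarrow> Ck_on j U g \<Longrightarrow> Ck_on j U (\<lambda>x. h (f x) (g x))"
  shows "smooth_on S (\<lambda>x. h (f x) (g x))"
proof -
  obtain U1 f1 where 1: "open U1" "S \<subseteq> U1" "\<forall>j. Ck_on j U1 f1" "\<forall>x\<in>S. f1 x = f x"
    using assms(1) unfolding smooth_on_def by blast
  obtain U2 g1 where 2: "open U2" "S \<subseteq> U2" "\<forall>j. Ck_on j U2 g1" "\<forall>x\<in>S. g1 x = g x"
    using assms(2) unfolding smooth_on_def by blast
  have "Ck_on j (U1 \<inter> U2) (\<lambda>x. h (f1 x) (g1 x))" for j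
    by (rule op[of j _ f1 g1]; rule Ck_on_subset) (use 1 2 in auto)
  then show ?thesis unfolding smooth_on_def
    apply (intro exI[of _ "U1 \<inter> U2"] exI[of _ "\<lambda>x. h (f1 x) (g1 x)"])
    using 1 2 by auto
qed

lemma smooth_on_add: "smooth_on S f \<Longrightarrow> smooth_on S g \<Longrightarrow> smooth_on S (\<lambda>x. f x + g x)"
  by (rule smooth_on_binop[where h="(+)"]) (auto intro: Ck_on_add)

lemma smooth_on_mult: "smooth_on S f \<Longrightarrow> smooth_on S g \<Longrightarrow> smooth_on S (\<lambda>x. f x * g x)"
  by (rule smooth_on_binop[where h="(*)"]) (auto intro: Ck_on_mult)

lemma smooth_on_sum: "finite A \<Longrightarrow> (\<And>a. a \<in> A \<Longrightarrow> smooth_on S (f a)) \<Longrightarrow> smooth_on S (\<lambda>x. \<Sum>a\<in>A. f a x)"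
  by (induction A rule: finite_induct) (auto intro: smooth_on_add smooth_on_const)

lemma smooth_on_prod: "finite A \<Longrightarrow> (\<And>a. a \<in> A \<Longrightarrow> smooth_on S (f a)) \<Longrightarrow> smooth_on S (\<lambda>x. \<Prod>a\<in>A. f a x)"
  by (induction A rule: finite_induct) (auto intro: smooth_on_mult smooth_on_const)

lemma sm_carrier: "smooth_mat_on S r c A \<Longrightarrow> k \<in> S \<Longrightarrow> A k \<in> carrier_mat r c"
  unfolding smooth_mat_on_def by auto

lemma sm_entry: "smooth_mat_on S r c A \<Longrightarrow> i < r \<Longrightarrow> j < c \<Longrightarrow> smooth_on S (\<lambda>k. A k $$ (i,j))"
  unfolding smooth_mat_on_def by auto

lemma sm_intro: "(\<And>k. k \<in> S \<Longrightarrow> A k \<in> carrier_mat r c) \<Longrightarrow>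
   (\<And>i j. i < r \<Longrightarrow> j < c \<Longrightarrow> smooth_on S (\<lambda>k. A k $$ (i,j))) \<Longrightarrow> smooth_mat_on S r c A"
  unfolding smooth_mat_on_def by auto

lemma sm_mult:
  assumes A: "smooth_mat_on S r n A" and B: "smooth_mat_on S n c B"
  shows "smooth_mat_on S r c (\<lambda>k. A k * B k)"
proof (rule sm_intro)
  fix k assume k: "k \<in> S" then show "A k * B k \<in> carrier_mat r c"
    using sm_carrier[OF A k] sm_carrier[OF B k] by auto
next
  fix i j assume ij: "i < r" "j < c"
  have "smooth_on S (\<lambda>k. \<Sum>l\<in>{0..<n}. A k $$ (i,l) * B k $$ (l,j))"
    by (intro smooth_on_sum smooth_on_mult sm_entry[OF A] sm_entry[OF B]) (use ij in auto)
  then show "smooth_on S (\<lambda>k. (A k * B k) $$ (i,j))"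
  proof (rule smooth_on_cong)
    fix k assume k: "k \<in> S"
    then have "A k \<in> carrier_mat r n" "B k \<in> carrier_mat n c" using sm_carrier[OF A k] sm_carrier[OF B k] by auto
    then show "(\<Sum>l\<in>{0..<n}. A k $$ (i,l) * B k $$ (l,j)) = (A k * B k) $$ (i,j)"
      using ij by (auto simp: scalar_prod_def intro!: sum.cong)
  qed
qed

lemma sm_add:
  assumes A: "smooth_mat_on S r c A" and B: "smooth_mat_on S r c B"
  shows "smooth_mat_on S r c (\<lambda>k. A k + B k)"
proof (rule sm_intro)
  fix k assume k: "k \<in> S" then show "A k + B k \<in> carrier_mat r c"
    using sm_carrier[OF A k] sm_carrier[OF B k] by auto
next
  fix i j assume ij: "i < r" "j < c"
  have "smooth_on S (\<lambda>k. A k $$ (i,j) + B k $$ (i,j))"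
    by (intro smooth_on_add sm_entry[OF A] sm_entry[OF B]) (use ij in auto)
  then show "smooth_on S (\<lambda>k. (A k + B k) $$ (i,j))"
  proof (rule smooth_on_cong)
    fix k assume k: "k \<in> S"
    show "A k $$ (i,j) + B k $$ (i,j) = (A k + B k) $$ (i,j)"
      using ij sm_carrier[OF A k] sm_carrier[OF B k] by auto
  qed
qed

lemma sm_transpose:
  assumes A: "smooth_mat_on S r c A"
  shows "smooth_mat_on S c r (\<lambda>k. transpose_mat (A k))"
proof (rule sm_intro)
  fix k assume k: "k \<in> S" then show "transpose_mat (A k) \<in> carrier_mat c r"
    using sm_carrier[OF A k] by auto
next
  fix i j assume ij: "i < c" "j < r"
  have "smooth_on S (\<lambda>k. A k $$ (j,i))"
    by (intro sm_entry[OF A]) (use ij in auto)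
  then show "smooth_on S (\<lambda>k. (transpose_mat (A k)) $$ (i,j))"
  proof (rule smooth_on_cong)
    fix k assume k: "k \<in> S"
    show "A k $$ (j,i) = (transpose_mat (A k)) $$ (i,j)"
      using ij sm_carrier[OF A k] by auto
  qed
qed

lemma sm_smult:
  assumes A: "smooth_mat_on S r c A" and a: "smooth_on S a"
  shows "smooth_mat_on S r c (\<lambda>k. a k \<cdot>\<^sub>m A k)"
proof (rule sm_intro)
  fix k assume k: "k \<in> S" then show "a k \<cdot>\<^sub>m A k \<in> carrier_mat r c"
    using sm_carrier[OF A k] by auto
next
  fix i j assume ij: "i < r" "j < c"
  have "smooth_on S (\<lambda>k. a k * A k $$ (i,j))"
    by (intro smooth_on_mult a sm_entry[OF A]) (use ij in auto)
  then show "smooth_on S (\<lambda>k. (a k \<cdot>\<^sub>m A k) $$ (i,j))"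
  proof (rule smooth_on_cong)
    fix k assume k: "k \<in> S"
    show "a k * A k $$ (i,j) = (a k \<cdot>\<^sub>m A k) $$ (i,j)"
      using ij sm_carrier[OF A k] by auto
  qed
qed

lemma sm_one: "smooth_mat_on S n n (\<lambda>k. 1\<^sub>m n)"
  by (rule sm_intro) (auto intro: smooth_on_const)

lemma sm_zero: "smooth_mat_on S r c (\<lambda>k. 0\<^sub>m r c)"
  by (rule sm_intro) (auto intro: smooth_on_const)

lemma sm_four_block:
  assumes A: "smooth_mat_on S r1 c1 A" and B: "smooth_mat_on S r1 c2 B"
    and C: "smooth_mat_on S r2 c1 C" and D: "smooth_mat_on S r2 c2 D"
  shows "smooth_mat_on S (r1+r2) (c1+c2) (\<lambda>k. four_block_mat (A k) (B k) (C k) (D k))"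
proof (rule sm_intro)
  fix k assume k: "k \<in> S" then show "four_block_mat (A k) (B k) (C k) (D k) \<in> carrier_mat (r1+r2) (c1+c2)"
    using sm_carrier[OF A k] sm_carrier[OF D k] by auto
next
  fix i j assume ij: "i < r1+r2" "j < c1+c2"
  have "smooth_on S (\<lambda>k. if i < r1 then if j < c1 then A k $$ (i, j) else B k $$ (i, j - c1)
           else if j < c1 then C k $$ (i - r1, j) else D k $$ (i - r1, j - c1))"
    using ij by (cases "i < r1"; cases "j < c1") 
       (auto intro!: sm_entry[OF A] sm_entry[OF B] sm_entry[OF C] sm_entry[OF D])
  then show "smooth_on S (\<lambda>k. four_block_mat (A k) (B k) (C k) (D k) $$ (i,j))"
  proof (rule smooth_on_cong)
    fix k assume k: "k \<in> S"
    show "(if i < r1 then if j < c1 then A k $$ (i, j) else B k $$ (i, j - c1)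
           else if j < c1 then C k $$ (i - r1, j) else D k $$ (i - r1, j - c1)) = four_block_mat (A k) (B k) (C k) (D k) $$ (i,j)"
      using ij sm_carrier[OF A k] sm_carrier[OF B k] sm_carrier[OF C k] sm_carrier[OF D k] by auto
  qed
qed

lemma sm_det:
  assumes A: "smooth_mat_on S n n A"
  shows "smooth_on S (\<lambda>k. Determinant.det (A k))"
proof -
  have "smooth_on S (\<lambda>k. \<Sum>p\<in>{p. p permutes {0..<n}}. of_int (sign p) * (\<Prod>i\<in>{0..<n}. A k $$ (i, p i)))"
  proof (intro smooth_on_sum smooth_on_mult smooth_on_const smooth_on_prod)
    show "finite {p. p permutes {0..<n}}" by (rule finite_permutations) simp
  next
    fix p i assume "p \<in> {p. p permutes {0..<n}}" "i \<in> {0..<n}"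
    then show "smooth_on S (\<lambda>k. A k $$ (i, p i))"
      by (intro sm_entry[OF A]) (auto simp: permutes_in_image)
  qed simp
  then show ?thesis
  proof (rule smooth_on_cong)
    fix k assume k: "k \<in> S"
    show "(\<Sum>p\<in>{p. p permutes {0..<n}}. of_int (sign p) * (\<Prod>i\<in>{0..<n}. A k $$ (i, p i))) = Determinant.det (A k)"
      using sm_carrier[OF A k] by (auto simp: det_def)
  qed
qed

lemma sm_delete:
  assumes A: "smooth_mat_on S n n A" and "i < n" "j < n"
  shows "smooth_mat_on S (n-1) (n-1) (\<lambda>k. mat_delete (A k) i j)"
proof (rule sm_intro)
  fix k assume k: "k \<in> S" then show "mat_delete (A k) i j \<in> carrier_mat (n-1) (n-1)"
    using sm_carrier[OF A k] by (auto simp: mat_delete_def)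
next
  fix a b assume ab: "a < n-1" "b < n-1"
  have "smooth_on S (\<lambda>k. A k $$ (if a < i then a else Suc a, if b < j then b else Suc b))"
    by (intro sm_entry[OF A]) (use ab in auto)
  then show "smooth_on S (\<lambda>k. mat_delete (A k) i j $$ (a,b))"
  proof (rule smooth_on_cong)
    fix k assume k: "k \<in> S"
    show "A k $$ (if a < i then a else Suc a, if b < j then b else Suc b) = mat_delete (A k) i j $$ (a,b)"
      using ab sm_carrier[OF A k] by (auto simp: mat_delete_def)
  qed
qed

lemma sm_adj:
  assumes A: "smooth_mat_on S n n A"
  shows "smooth_mat_on S n n (\<lambda>k. adj_mat (A k))"
proof (rule sm_intro)
  fix k assume k: "k \<in> S" then show "adj_mat (A k) \<in> carrier_mat n n"
    using sm_carrier[OF A k] adj_mat(1) by blast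
next
  fix i j assume ij: "i < n" "j < n"
  have "smooth_on S (\<lambda>k. (- 1) ^ (j + i) * Determinant.det (mat_delete (A k) j i))"
    by (intro smooth_on_mult smooth_on_const sm_det[of _ "n-1"] sm_delete[OF A]) (use ij in auto)
  then show "smooth_on S (\<lambda>k. adj_mat (A k) $$ (i,j))"
  proof (rule smooth_on_cong)
    fix k assume k: "k \<in> S"
    show "(- 1) ^ (j + i) * Determinant.det (mat_delete (A k) j i) = adj_mat (A k) $$ (i,j)"
      using ij sm_carrier[OF A k] by (auto simp: adj_mat_def cofactor_def)
  qed
qed

lemma self_scalar_prod_ge0: "scalar_prod (v::real vec) v \<ge> 0"
  unfolding scalar_prod_def by (auto intro: sum_nonneg)

lemma self_scalar_prod_zero: assumes "(v::real vec) \<in> carrier_vec n" "scalar_prod v v = 0" shows "v = 0\<^sub>v n"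
proof -
  have "\<forall>i\<in>{0..<dim_vec v}. v $ i * v $ i = 0"
    using assms(2) unfolding scalar_prod_def by (subst (asm) sum_nonneg_eq_0_iff) auto
  then show ?thesis using assms(1) by (intro eq_vecI) auto
qed

lemma mat_vec_zero: "A \<in> carrier_mat r c \<Longrightarrow> A *\<^sub>v 0\<^sub>v c = 0\<^sub>v r"
  by (intro eq_vecI) auto

lemma zero_mat_vec: "b \<in> carrier_vec c \<Longrightarrow> 0\<^sub>m r c *\<^sub>v b = 0\<^sub>v r"
  by (intro eq_vecI) (auto simp: scalar_prod_def)

lemma scalar_prod_transpose:
  fixes X :: "real mat"
  assumes "X \<in> carrier_mat r c" "b \<in> carrier_vec c" "w \<in> carrier_vec r"
  shows "scalar_prod b (transpose_mat X *\<^sub>v w) = scalar_prod (X *\<^sub>v b) w"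
proof -
  have "scalar_prod b (transpose_mat X *\<^sub>v w) = scalar_prod (transpose_mat X *\<^sub>v w) b"
    by (rule comm_scalar_prod[of _ c]) (use assms in auto)
  also have "\<dots> = scalar_prod w (X *\<^sub>v b)" using transpose_vec_mult_scalar[OF assms(1,2,3)] .
  also have "\<dots> = scalar_prod (X *\<^sub>v b) w" using assms by (intro comm_scalar_prod[of _ r]) auto
  finally show ?thesis .
qed

lemma pd_nonneg: "pos_def_mat n A \<Longrightarrow> v \<in> carrier_vec n \<Longrightarrow> scalar_prod v (A *\<^sub>v v) \<ge> 0"
  unfolding pos_def_mat_def by (cases "v = 0\<^sub>v n") (auto simp: mat_vec_zero dual_order.order_iff_strict)

definition mkB :: "nat \<Rightarrow> nat \<Rightarrow> real mat \<Rightarrow> real mat \<Rightarrow> real mat \<Rightarrow> real mat" where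
  "mkB n m Q R H1 = (let M = Q * R; Pi = Determinant.det M \<cdot>\<^sub>m 1\<^sub>m m - R * adj_mat M * Q in
      transpose_mat Q * H1 * Q + transpose_mat Pi * Pi)"

definition mkH :: "nat \<Rightarrow> nat \<Rightarrow> real mat \<Rightarrow> real mat \<Rightarrow> real mat \<Rightarrow> real mat" where
  "mkH n m Q R H1 = four_block_mat (H1 * (Q * R)) (0\<^sub>m n m) (0\<^sub>m m n) (mkB n m Q R H1)"

lemma pointwise_b:
  fixes Q R H1 :: "real mat"
  assumes Q: "Q \<in> carrier_mat n m" and R: "R \<in> carrier_mat m n"
    and H1pd: "pos_def_mat n H1" and comm: "H1 * (Q * R) = transpose_mat (Q * R) * H1"
    and Apd: "pos_def_mat n (H1 * (Q * R))"
  shows "pos_def_mat (n + m) (mkH n m Q R H1) \<and>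
    mkH n m Q R H1 * block_P n m Q R = transpose_mat (block_P n m Q R) * mkH n m Q R H1"
proof -
  define M where "M = Q * R"
  define d where "d = Determinant.det M"
  define Ad where "Ad = adj_mat M"
  define Pi where "Pi = d \<cdot>\<^sub>m 1\<^sub>m m - R * Ad * Q"
  define A where "A = H1 * M"
  define B where "B = transpose_mat Q * H1 * Q + transpose_mat Pi * Pi"
  have H1: "H1 \<in> carrier_mat n n" and H1sym: "transpose_mat H1 = H1"
    using H1pd unfolding pos_def_mat_def symmetric_mat_def by auto
  have M: "M \<in> carrier_mat n n" unfolding M_def using Q R by auto
  have Ad: "Ad \<in> carrier_mat n n" unfolding Ad_def using adj_mat(1)[OF M] .
  have AdM: "Ad * M = d \<cdot>\<^sub>m 1\<^sub>m n" unfolding Ad_def d_def using adj_mat(3)[OF M] .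
  have Pi: "Pi \<in> carrier_mat m m" unfolding Pi_def using R Ad Q by auto
  have A: "A \<in> carrier_mat n n" unfolding A_def using H1 M by auto
  have B: "B \<in> carrier_mat m m" unfolding B_def using Q H1 Pi by auto
  have Apd': "pos_def_mat n A" using Apd unfolding A_def M_def .
  have Asym: "transpose_mat A = A" using Apd' unfolding pos_def_mat_def symmetric_mat_def by auto
  have H: "mkH n m Q R H1 = four_block_mat A (0\<^sub>m n m) (0\<^sub>m m n) B"
    unfolding mkH_def mkB_def Let_def A_def B_def Pi_def Ad_def d_def M_def ..
  have d0: "d \<noteq> 0"
  proof
    assume "d = 0"
    then obtain v where v: "v \<in> carrier_vec n" "v \<noteq> 0\<^sub>v n" "M *\<^sub>v v = 0\<^sub>v n"
      using det_0_iff_vec_prod_zero[OF M] unfolding d_def by auto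
    have "A *\<^sub>v v = 0\<^sub>v n" unfolding A_def using v H1 M by (simp add: assoc_mult_mat_vec mat_vec_zero)
    then have "scalar_prod v (A *\<^sub>v v) = 0" using v by simp
    moreover have "scalar_prod v (A *\<^sub>v v) > 0" using Apd' v unfolding pos_def_mat_def by auto
    ultimately show False by simp
  qed
  have PiR: "Pi * R = 0\<^sub>m m n"
  proof -
    have "Pi * R = d \<cdot>\<^sub>m 1\<^sub>m m * R - R * Ad * Q * R"
      unfolding Pi_def using R Ad Q by (subst minus_mult_distrib_mat) auto
    also have "R * Ad * Q * R = R * (Ad * M)"
    proof -
      have "R * Ad * Q * R = (R * Ad) * (Q * R)" by (rule assoc_mult_mat) (use R Ad Q in auto)
      also have "\<dots> = R * (Ad * (Q * R))" by (rule assoc_mult_mat) (use R Ad Q in auto)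
      finally show ?thesis unfolding M_def .
    qed
    also have "\<dots> = d \<cdot>\<^sub>m R" unfolding AdM using R
      by (subst mult_smult_distrib[of _ m n]) auto
    also have "d \<cdot>\<^sub>m 1\<^sub>m m * R = d \<cdot>\<^sub>m R" using R
      by (subst mult_smult_assoc_mat[of _ m m]) auto
    finally show ?thesis using R by simp
  qed
  have BR: "B * R = transpose_mat Q * A"
  proof -
    have "B * R = transpose_mat Q * H1 * Q * R + transpose_mat Pi * Pi * R"
      unfolding B_def using Q H1 Pi R by (subst add_mult_distrib_mat[of _ m m]) auto
    also have "transpose_mat Pi * Pi * R = 0\<^sub>m m n" using Pi R PiR by simp
    also have "transpose_mat Q * H1 * Q * R = transpose_mat Q * A" unfolding A_def M_def using Q H1 R
      by (simp add: assoc_mult_mat[of "transpose_mat Q" m n "H1*Q" m R n] assoc_mult_mat[of H1 n n Q m R n])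
    finally show ?thesis using Q A by simp
  qed
  have RB: "transpose_mat R * B = A * Q"
  proof -
    have "transpose_mat R * B = transpose_mat R * (transpose_mat Q * H1 * Q) + transpose_mat R * (transpose_mat Pi * Pi)"
      unfolding B_def using Q H1 Pi R by (subst mult_add_distrib_mat[of _ n m]) auto
    also have "transpose_mat R * (transpose_mat Pi * Pi) = transpose_mat (Pi * R) * Pi"
      using Pi R by (simp add: transpose_mult[of Pi m m R n] assoc_mult_mat[of "transpose_mat R" n m "transpose_mat Pi" m Pi m])
    also have "\<dots> = 0\<^sub>m n m" using PiR Pi by simp
    also have "transpose_mat R * (transpose_mat Q * H1 * Q) = (transpose_mat M * H1) * Q"
      unfolding M_def using Q R H1 
      by (simp add: transpose_mult[of Q n m R n] assoc_mult_mat[of "transpose_mat R" n m "transpose_mat Q" n H1 n]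
        assoc_mult_mat[of "transpose_mat R" n m "transpose_mat Q * H1" n Q m]
        assoc_mult_mat[of "transpose_mat Q" m n H1 n Q m]
        assoc_mult_mat[of "transpose_mat R" n m "transpose_mat Q" n "H1 * Q" m])
    also have "transpose_mat M * H1 = A" unfolding A_def using comm unfolding M_def by simp
    finally show ?thesis using Q A by simp
  qed
  have P: "block_P n m Q R = four_block_mat (0\<^sub>m n n) Q R (0\<^sub>m m m)" unfolding block_P_def ..
  have PT: "transpose_mat (block_P n m Q R) = four_block_mat (0\<^sub>m n n) (transpose_mat R) (transpose_mat Q) (0\<^sub>m m m)"
    unfolding P using Q R by (subst transpose_four_block_mat) auto
  have eq: "mkH n m Q R H1 * block_P n m Q R = transpose_mat (block_P n m Q R) * mkH n m Q R H1"
  proof -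
    have QT: "transpose_mat Q \<in> carrier_mat m n" and RT: "transpose_mat R \<in> carrier_mat n m" using Q R by auto
    have AQ: "A * Q \<in> carrier_mat n m" and BR': "B * R \<in> carrier_mat m n" using A Q B R by auto
    have "mkH n m Q R H1 * block_P n m Q R = four_block_mat (A * 0\<^sub>m n n + 0\<^sub>m n m * R) (A * Q + 0\<^sub>m n m * 0\<^sub>m m m)
        (0\<^sub>m m n * 0\<^sub>m n n + B * R) (0\<^sub>m m n * Q + B * 0\<^sub>m m m)"
      unfolding H P by (rule mult_four_block_mat[OF A zero_carrier_mat zero_carrier_mat B zero_carrier_mat Q R zero_carrier_mat])
    also have "\<dots> = four_block_mat (0\<^sub>m n n) (A * Q) (B * R) (0\<^sub>m m m)"
      using A Q B R AQ BR' by (simp add: right_mult_zero_mat[OF A] left_mult_zero_mat[OF R] right_mult_zero_mat[OF B]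
         left_mult_zero_mat[OF Q] left_mult_zero_mat[of "0\<^sub>m n n" n n m] right_mult_zero_mat[of "0\<^sub>m n m" n m m])
    finally have l: "mkH n m Q R H1 * block_P n m Q R = four_block_mat (0\<^sub>m n n) (A * Q) (B * R) (0\<^sub>m m m)" .
    have "transpose_mat (block_P n m Q R) * mkH n m Q R H1 = four_block_mat (0\<^sub>m n n * A + transpose_mat R * 0\<^sub>m m n) (0\<^sub>m n n * 0\<^sub>m n m + transpose_mat R * B)
        (transpose_mat Q * A + 0\<^sub>m m m * 0\<^sub>m m n) (transpose_mat Q * 0\<^sub>m n m + 0\<^sub>m m m * B)"
      unfolding H PT by (rule mult_four_block_mat[OF zero_carrier_mat RT QT zero_carrier_mat A zero_carrier_mat zero_carrier_mat B])
    also have "\<dots> = four_block_mat (0\<^sub>m n n) (transpose_mat R * B) (transpose_mat Q * A) (0\<^sub>m m m)"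
      using A Q B R QT RT by (simp add: left_mult_zero_mat[OF A] right_mult_zero_mat[OF RT] left_mult_zero_mat[OF B]
         right_mult_zero_mat[OF QT] left_mult_zero_mat[of "0\<^sub>m n m" n m n] left_mult_zero_mat[of "0\<^sub>m m n" m n m])
    finally have r: "transpose_mat (block_P n m Q R) * mkH n m Q R H1 = four_block_mat (0\<^sub>m n n) (transpose_mat R * B) (transpose_mat Q * A) (0\<^sub>m m m)" .
    show ?thesis unfolding l r BR RB ..
  qed
  have Bsym: "transpose_mat B = B"
  proof -
    have QT: "transpose_mat Q \<in> carrier_mat m n" using Q by auto
    have e1: "transpose_mat Q * H1 * Q = transpose_mat Q * (H1 * Q)" by (rule assoc_mult_mat[OF QT H1 Q])
    have e2: "transpose_mat (transpose_mat Q * (H1 * Q)) = transpose_mat Q * (H1 * Q)"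
    proof -
      have "transpose_mat (transpose_mat Q * (H1 * Q)) = transpose_mat (H1 * Q) * transpose_mat (transpose_mat Q)"
        by (rule transpose_mult[OF QT]) (use H1 Q in auto)
      also have "\<dots> = (transpose_mat Q * H1) * Q" using transpose_mult[OF H1 Q] H1sym by simp
      finally show ?thesis using e1 by simp
    qed
    have e3: "transpose_mat (transpose_mat Pi * Pi) = transpose_mat Pi * Pi"
      using Pi by (simp add: transpose_mult[of "transpose_mat Pi" m m Pi m])
    show ?thesis unfolding B_def e1 using Q H1 Pi QT
      by (subst transpose_add[of _ m m]) (auto simp: e2 e3)
  qed
  have Bpos: "scalar_prod b (B *\<^sub>v b) > 0" if b: "b \<in> carrier_vec m" "b \<noteq> 0\<^sub>v m" for b
  proof -
    have Qb: "Q *\<^sub>v b \<in> carrier_vec n" using Q b by auto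
    have Pib: "Pi *\<^sub>v b \<in> carrier_vec m" using Pi b by auto
    have "scalar_prod b (B *\<^sub>v b) = scalar_prod b (transpose_mat Q *\<^sub>v (H1 *\<^sub>v (Q *\<^sub>v b)))
        + scalar_prod b (transpose_mat Pi *\<^sub>v (Pi *\<^sub>v b))"
    proof -
      have QT: "transpose_mat Q \<in> carrier_mat m n" using Q by auto
      have PT: "transpose_mat Pi \<in> carrier_mat m m" using Pi by auto
      have "B *\<^sub>v b = (transpose_mat Q * H1 * Q) *\<^sub>v b + (transpose_mat Pi * Pi) *\<^sub>v b"
        unfolding B_def by (rule add_mult_distrib_mat_vec[of _ m m]) (use Q H1 Pi b in auto)
      also have "(transpose_mat Q * H1 * Q) *\<^sub>v b = transpose_mat Q *\<^sub>v (H1 *\<^sub>v (Q *\<^sub>v b))"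
        using assoc_mult_mat_vec[of "transpose_mat Q * H1" m n Q m b] assoc_mult_mat_vec[OF QT H1 Qb] QT H1 Q b
        by simp
      also have "(transpose_mat Pi * Pi) *\<^sub>v b = transpose_mat Pi *\<^sub>v (Pi *\<^sub>v b)"
        using assoc_mult_mat_vec[OF PT Pi b(1)] .
      finally have eqB: "B *\<^sub>v b = transpose_mat Q *\<^sub>v (H1 *\<^sub>v (Q *\<^sub>v b)) + transpose_mat Pi *\<^sub>v (Pi *\<^sub>v b)" .
      show ?thesis unfolding eqB
        by (rule scalar_prod_add_distrib[of b m]) (use QT H1 Qb PT Pib b in auto)
    qed
    also have "\<dots> = scalar_prod (Q *\<^sub>v b) (H1 *\<^sub>v (Q *\<^sub>v b)) + scalar_prod (Pi *\<^sub>v b) (Pi *\<^sub>v b)"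
      using Q H1 Pi b by (simp add: scalar_prod_transpose[of _ n m] scalar_prod_transpose[of _ m m])
    finally have eqb: "scalar_prod b (B *\<^sub>v b) = scalar_prod (Q *\<^sub>v b) (H1 *\<^sub>v (Q *\<^sub>v b)) + scalar_prod (Pi *\<^sub>v b) (Pi *\<^sub>v b)" .
    have t1: "scalar_prod (Q *\<^sub>v b) (H1 *\<^sub>v (Q *\<^sub>v b)) \<ge> 0" using pd_nonneg[OF H1pd Qb] .
    have t2: "scalar_prod (Pi *\<^sub>v b) (Pi *\<^sub>v b) \<ge> 0" by (rule self_scalar_prod_ge0)
    show ?thesis
    proof (rule ccontr)
      assume "\<not> ?thesis"
      then have z1: "scalar_prod (Q *\<^sub>v b) (H1 *\<^sub>v (Q *\<^sub>v b)) = 0" and z2: "scalar_prod (Pi *\<^sub>v b) (Pi *\<^sub>v b) = 0"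
        using eqb t1 t2 by linarith+
      have Qb0: "Q *\<^sub>v b = 0\<^sub>v n" using z1 H1pd Qb unfolding pos_def_mat_def by force
      have "Pi *\<^sub>v b = 0\<^sub>v m" using self_scalar_prod_zero[OF Pib z2] .
      moreover have "Pi *\<^sub>v b = d \<cdot>\<^sub>v b"
      proof -
        have AQ: "Ad * Q \<in> carrier_mat n m" using Ad Q by auto
        have z: "R * Ad * Q *\<^sub>v b = 0\<^sub>v m"
          using assoc_mult_mat[OF R Ad Q] assoc_mult_mat_vec[OF R AQ b(1)] assoc_mult_mat_vec[OF Ad Q b(1)]
            Qb0 mat_vec_zero[OF Ad] mat_vec_zero[OF R] by simp
        have o: "(d \<cdot>\<^sub>m 1\<^sub>m m) *\<^sub>v b = d \<cdot>\<^sub>v b"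
        proof (rule eq_vecI)
          fix i assume "i < dim_vec (d \<cdot>\<^sub>v b)" then have i: "i < m" using b by auto
          have "((d \<cdot>\<^sub>m 1\<^sub>m m) *\<^sub>v b) $ i = (\<Sum>ia=0..<m. d * (if ia = i then 1 else 0) * b $ ia)"
            using i b by (simp add: scalar_prod_def)
          also have "\<dots> = (\<Sum>ia=0..<m. if ia = i then d * b $ ia else 0)" by (rule sum.cong) auto
          also have "\<dots> = (d \<cdot>\<^sub>v b) $ i" using i b by simp
          finally show "((d \<cdot>\<^sub>m 1\<^sub>m m) *\<^sub>v b) $ i = (d \<cdot>\<^sub>v b) $ i" .
        qed (use b in auto)
        have "Pi *\<^sub>v b = (d \<cdot>\<^sub>m 1\<^sub>m m) *\<^sub>v b - R * Ad * Q *\<^sub>v b"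
          unfolding Pi_def by (rule minus_mult_distrib_mat_vec[of _ m m]) (use R Ad Q b in auto)
        then show ?thesis unfolding z o using b by simp
      qed
      ultimately have "d \<cdot>\<^sub>v b = 0\<^sub>v m" by simp
      then have "b = 0\<^sub>v m"
      proof -
        assume db: "d \<cdot>\<^sub>v b = 0\<^sub>v m"
        show ?thesis
        proof (rule eq_vecI)
          fix i assume "i < dim_vec (0\<^sub>v m :: real vec)" then have i: "i < m" by simp
          have "(d \<cdot>\<^sub>v b) $ i = 0" using db i by simp
          then have "d * b $ i = 0" using i b by simp
          then show "b $ i = (0\<^sub>v m :: real vec) $ i" using d0 i by simp
        qed (use b in auto)
      qed
      then show False using b by simp
    qed
  qed
  have pd: "pos_def_mat (n + m) (mkH n m Q R H1)"
    unfolding pos_def_mat_def symmetric_mat_def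
  proof (intro conjI ballI impI)
    show "mkH n m Q R H1 \<in> carrier_mat (n + m) (n + m)" unfolding H using A B by auto
    show "transpose_mat (mkH n m Q R H1) = mkH n m Q R H1"
      unfolding H using A B by (simp add: transpose_four_block_mat[of _ n n _ m _ m] Asym Bsym)
    fix v :: "real vec" assume v: "v \<in> carrier_vec (n + m)" "v \<noteq> 0\<^sub>v (n + m)"
    define a where "a = vec_first v n"
    define b where "b = vec_last v m"
    have a: "a \<in> carrier_vec n" and b: "b \<in> carrier_vec m" unfolding a_def b_def by auto
    have vab: "v = a @\<^sub>v b" unfolding a_def b_def using v by simp
    have "mkH n m Q R H1 *\<^sub>v v = (A *\<^sub>v a) @\<^sub>v (B *\<^sub>v b)"
      unfolding H vab using A B a b
      by (simp add: four_block_mat_mult_vec[of _ n n _ m _ m] zero_mat_vec)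
    then have "scalar_prod v (mkH n m Q R H1 *\<^sub>v v) = scalar_prod a (A *\<^sub>v a) + scalar_prod b (B *\<^sub>v b)"
      unfolding vab using A B a b by (simp add: scalar_prod_append[of _ n _ m])
    moreover have "scalar_prod a (A *\<^sub>v a) \<ge> 0" using pd_nonneg[OF Apd' a] .
    moreover have "scalar_prod b (B *\<^sub>v b) \<ge> 0" using Bpos b by (cases "b = 0\<^sub>v m") (auto simp: mat_vec_zero[OF B] less_imp_le)
    moreover have "a \<noteq> 0\<^sub>v n \<or> b \<noteq> 0\<^sub>v m" using v vab by auto
    moreover have "a \<noteq> 0\<^sub>v n \<Longrightarrow> scalar_prod a (A *\<^sub>v a) > 0" using Apd' a unfolding pos_def_mat_def by auto
    ultimately show "scalar_prod v (mkH n m Q R H1 *\<^sub>v v) > 0" using Bpos[OF b] by fastforce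
  qed
  show ?thesis using pd eq by simp
qed



lemma smult_one_mat_vec: assumes z: "z \<in> carrier_vec N"
  shows "(k \<cdot>\<^sub>m 1\<^sub>m N) *\<^sub>v z = (k::'a::comm_ring_1) \<cdot>\<^sub>v z"
proof (rule eq_vecI)
  fix i assume "i < dim_vec (k \<cdot>\<^sub>v z)" then have i: "i < N" using z by auto
  have "((k \<cdot>\<^sub>m 1\<^sub>m N) *\<^sub>v z) $ i = (\<Sum>ia=0..<N. k * (if ia = i then 1 else 0) * z $ ia)"
    using i z by (simp add: scalar_prod_def)
  also have "\<dots> = (\<Sum>ia=0..<N. if ia = i then k * z $ ia else 0)" by (rule sum.cong) auto
  also have "\<dots> = (k \<cdot>\<^sub>v z) $ i" using i z by simp
  finally show "((k \<cdot>\<^sub>m 1\<^sub>m N) *\<^sub>v z) $ i = (k \<cdot>\<^sub>v z) $ i" .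
qed (use z in auto)

lemma char_mult_vec: assumes A: "A \<in> carrier_mat N N" and z: "z \<in> carrier_vec N"
  shows "char_matrix A e *\<^sub>v z = A *\<^sub>v z + (- e) \<cdot>\<^sub>v z"
proof -
  have "char_matrix A e *\<^sub>v z = A *\<^sub>v z + ((- e) \<cdot>\<^sub>m 1\<^sub>m N) *\<^sub>v z"
    unfolding char_matrix_def using A by (subst add_mult_distrib_mat_vec[of A N N]) (use z in auto)
  then show ?thesis using smult_one_mat_vec[OF z] by simp
qed

lemma diag_mult_vec_index: assumes D: "D \<in> carrier_mat N N" "diagonal_mat D" and z: "z \<in> carrier_vec N"
  and i: "i < N"
  shows "(D *\<^sub>v z) $ i = D $$ (i,i) * z $ i"
proof -
  have "(D *\<^sub>v z) $ i = (\<Sum>j=0..<N. D $$ (i,j) * z $ j)"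
    using D i z by (simp add: scalar_prod_def)
  also have "\<dots> = (\<Sum>j=0..<N. if j = i then D $$ (i,i) * z $ j else 0)"
    by (rule sum.cong) (use D i in \<open>auto simp: diagonal_mat_def\<close>)
  also have "\<dots> = D $$ (i,i) * z $ i" using i by simp
  finally show ?thesis .
qed

lemma diag_kernel:
  fixes Mc :: "complex mat"
  assumes Mc: "Mc \<in> carrier_mat N N" and dg: "diagonalizable Mc"
    and u: "u \<in> carrier_vec N" and w: "w = Mc *\<^sub>v u + (- c) \<cdot>\<^sub>v u"
    and z: "Mc *\<^sub>v w + (- c) \<cdot>\<^sub>v w = 0\<^sub>v N"
  shows "w = 0\<^sub>v N"
proof -
  obtain D where sim: "similar_mat Mc D" and D: "diagonal_mat D" using dg unfolding diagonalizable_def by auto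
  obtain S T where wit: "similar_mat_wit Mc D S T" using sim unfolding similar_mat_def by auto
  have DN: "D \<in> carrier_mat N N" and S: "S \<in> carrier_mat N N" and T: "T \<in> carrier_mat N N"
    and ST: "S * T = 1\<^sub>m N" and TS: "T * S = 1\<^sub>m N" and eq: "Mc = S * D * T"
    using wit Mc unfolding similar_mat_wit_def Let_def by auto
  have wc: "w \<in> carrier_vec N" unfolding w using Mc u by auto
  have key: "T *\<^sub>v (Mc *\<^sub>v y) = D *\<^sub>v (T *\<^sub>v y)" if y: "y \<in> carrier_vec N" for y
  proof -
    have "Mc *\<^sub>v y = S *\<^sub>v (D *\<^sub>v (T *\<^sub>v y))"
    proof -
      have DT: "D * T \<in> carrier_mat N N" using DN T by auto
      have "Mc = S * (D * T)" using eq assoc_mult_mat[OF S DN T] by simp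
      then show ?thesis using assoc_mult_mat_vec[OF S DT y] assoc_mult_mat_vec[OF DN T y] by simp
    qed
    then have "T *\<^sub>v (Mc *\<^sub>v y) = (T * S) *\<^sub>v (D *\<^sub>v (T *\<^sub>v y))"
      using S DN T y by (simp add: assoc_mult_mat_vec[OF T S])
    then show ?thesis unfolding TS using DN T y by simp
  qed
  have lin: "T *\<^sub>v (Mc *\<^sub>v y + (- c) \<cdot>\<^sub>v y) = D *\<^sub>v (T *\<^sub>v y) + (- c) \<cdot>\<^sub>v (T *\<^sub>v y)"
    if y: "y \<in> carrier_vec N" for y
  proof -
    have "T *\<^sub>v (Mc *\<^sub>v y + (- c) \<cdot>\<^sub>v y) = T *\<^sub>v (Mc *\<^sub>v y) + T *\<^sub>v ((- c) \<cdot>\<^sub>v y)"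
      by (rule mult_add_distrib_mat_vec[OF T]) (use Mc y in auto)
    also have "T *\<^sub>v ((- c) \<cdot>\<^sub>v y) = (- c) \<cdot>\<^sub>v (T *\<^sub>v y)" by (rule mult_mat_vec[OF T y])
    finally show ?thesis using key[OF y] by simp
  qed
  define u' where "u' = T *\<^sub>v u"
  define w' where "w' = T *\<^sub>v w"
  have u'c: "u' \<in> carrier_vec N" and w'c: "w' \<in> carrier_vec N" unfolding u'_def w'_def using T u wc by auto
  have w'eq: "w' = D *\<^sub>v u' + (- c) \<cdot>\<^sub>v u'" unfolding w'_def u'_def w using lin[OF u] .
  have z': "D *\<^sub>v w' + (- c) \<cdot>\<^sub>v w' = 0\<^sub>v N" unfolding w'_def using lin[OF wc] z T by (simp add: mat_vec_zero)
  have "w' = 0\<^sub>v N"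
  proof (rule eq_vecI)
    fix i assume "i < dim_vec (0\<^sub>v N :: complex vec)" then have i: "i < N" by simp
    have e1: "w' $ i = D $$ (i,i) * u' $ i - c * u' $ i"
      using arg_cong[OF w'eq, of "\<lambda>x. x $ i"] i u'c DN diag_mult_vec_index[OF DN D u'c i] by simp
    have e2: "D $$ (i,i) * w' $ i - c * w' $ i = 0"
      using arg_cong[OF z', of "\<lambda>x. x $ i"] i w'c DN diag_mult_vec_index[OF DN D w'c i] by simp
    have "(D $$ (i,i) - c) * w' $ i = 0" using e2 by (simp add: algebra_simps)
    moreover have wi: "w' $ i = (D $$ (i,i) - c) * u' $ i" using e1 by (simp add: algebra_simps)
    ultimately have "(D $$ (i,i) - c) * ((D $$ (i,i) - c) * u' $ i) = 0" by simp
    then have "(D $$ (i,i) - c) * u' $ i = 0" by simp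
    then show "w' $ i = (0\<^sub>v N :: complex vec) $ i" using wi i by simp
  qed (use w'c in auto)
  have "w = S *\<^sub>v w'"
    unfolding w'_def using assoc_mult_mat_vec[OF S T wc] ST wc by simp
  then show ?thesis using \<open>w' = 0\<^sub>v N\<close> S by (simp add: mat_vec_zero)
qed

lemma sum_min_eq:
  fixes xs :: "nat list"
  assumes "\<forall>x\<in>set xs. x \<ge> 1" "(\<Sum>n\<leftarrow>xs. min 2 n) = (\<Sum>n\<leftarrow>xs. min 1 n)"
  shows "\<forall>x\<in>set xs. x \<le> 1"
  using assms
proof (induction xs)
  case Nil then show ?case by simp
next
  case (Cons x xs)
  have "(\<Sum>n\<leftarrow>xs. min 1 n) \<le> (\<Sum>n\<leftarrow>xs. min 2 n)" by (rule sum_list_mono) simp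
  moreover have "min 1 x \<le> min 2 x" by simp
  ultimately have "min 2 x = min 1 x" "(\<Sum>n\<leftarrow>xs. min 2 n) = (\<Sum>n\<leftarrow>xs. min 1 n)"
    using Cons.prems(2) by auto
  then show ?case using Cons by auto
qed

lemma diagonal_four_block:
  assumes "A \<in> carrier_mat a a" "D \<in> carrier_mat d d" "diagonal_mat A" "diagonal_mat D"
  shows "diagonal_mat (four_block_mat A (0\<^sub>m a d) (0\<^sub>m d a) D)"
  using assms unfolding diagonal_mat_def by auto

lemma jordan_matrix_diag: "\<forall>(k,e)\<in>set n_as. k = 1 \<Longrightarrow> diagonal_mat (jordan_matrix n_as)"
proof (induction n_as)
  case Nil then show ?case by (simp add: diagonal_mat_def jordan_matrix_def)
next
  case (Cons ke n_as)
  obtain k e where ke: "ke = (k,e)" by force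
  have k: "k = 1" using Cons.prems ke by auto
  have id: "jordan_matrix (ke # n_as) = four_block_mat (jordan_block k e) (0\<^sub>m k (sum_list (map fst n_as)))
     (0\<^sub>m (sum_list (map fst n_as)) k) (jordan_matrix n_as)"
    unfolding ke jordan_matrix_def using jordan_matrix_carrier[of n_as]
    by (simp add: Let_def jordan_matrix_def)
  have "diagonal_mat (jordan_block k e)" unfolding k diagonal_mat_def by auto
  then show ?case unfolding id
    by (intro diagonal_four_block) (use Cons in auto)
qed

lemma diag_crit:
  fixes A :: "complex mat"
  assumes A: "A \<in> carrier_mat N N"
    and ker: "\<And>ev x. x \<in> carrier_vec N \<Longrightarrow> char_matrix A ev *\<^sub>v (char_matrix A ev *\<^sub>v x) = 0\<^sub>v N \<Longrightarrow> char_matrix A ev *\<^sub>v x = 0\<^sub>v N"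
  shows "diagonalizable A"
proof -
  obtain as where "char_poly A = (\<Prod>a\<leftarrow>as. [:- a, 1:])" using char_poly_factorized[OF A] by auto
  then obtain n_as where jnf: "jordan_nf A n_as" using jordan_nf_exists[OF A] by blast
  have sizes: "\<forall>(k,e)\<in>set n_as. k = 1"
  proof (clarify)
    fix k e assume ke: "(k,e) \<in> set n_as"
    define X where "X = char_matrix A e"
    have X: "X \<in> carrier_mat N N" unfolding X_def using A by auto
    have XX: "X * X \<in> carrier_mat N N" using X by auto
    have kerEq: "mat_kernel (X * X) = mat_kernel X"
    proof
      show "mat_kernel (X * X) \<subseteq> mat_kernel X"
      proof
        fix x assume "x \<in> mat_kernel (X * X)"
        then have x: "x \<in> carrier_vec N" "(X * X) *\<^sub>v x = 0\<^sub>v N" using mat_kernelD[OF XX] by auto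
        then have "X *\<^sub>v (X *\<^sub>v x) = 0\<^sub>v N" using assoc_mult_mat_vec[OF X X x(1)] by simp
        then have "X *\<^sub>v x = 0\<^sub>v N" using ker[OF x(1)] unfolding X_def by simp
        then show "x \<in> mat_kernel X" using mat_kernelI[OF X x(1)] by simp
      qed
      show "mat_kernel X \<subseteq> mat_kernel (X * X)"
      proof
        fix x assume "x \<in> mat_kernel X"
        then have x: "x \<in> carrier_vec N" "X *\<^sub>v x = 0\<^sub>v N" using mat_kernelD[OF X] by auto
        then have "(X * X) *\<^sub>v x = 0\<^sub>v N" using assoc_mult_mat_vec[OF X X x(1)] mat_vec_zero[OF X] by simp
        then show "x \<in> mat_kernel (X * X)" using mat_kernelI[OF XX x(1)] by simp
      qed
    qed
    have pow1: "X ^\<^sub>m 1 = X" using X by simp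
    have pow2: "X ^\<^sub>m 2 = X * X" using X by (simp add: numeral_2_eq_2)
    have "dim_gen_eigenspace A e 2 = dim_gen_eigenspace A e 1"
      unfolding dim_gen_eigenspace_def X_def[symmetric] pow1 pow2 kernel_dim_def
      using X XX kerEq by simp
    then have eqs: "(\<Sum>n\<leftarrow>map fst [(n, e')\<leftarrow>n_as . e' = e]. min 2 n) = (\<Sum>n\<leftarrow>map fst [(n, e')\<leftarrow>n_as . e' = e]. min 1 n)"
      unfolding dim_gen_eigenspace[OF jnf] by simp
    have ge1: "\<forall>x\<in>set (map fst [(n, e')\<leftarrow>n_as . e' = e]). x \<ge> 1"
      using jnf unfolding jordan_nf_def by (force simp: Suc_le_eq)
    have "k \<in> set (map fst [(n, e')\<leftarrow>n_as . e' = e])" using ke by force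
    then show "k = 1" using sum_min_eq[OF ge1 eqs] ge1 by fastforce
  qed
  have "diagonal_mat (jordan_matrix n_as)" by (rule jordan_matrix_diag[OF sizes])
  then show ?thesis using jnf unfolding jordan_nf_def diagonalizable_def by auto
qed


lemma zero_smult_vec': "(a::'a::comm_ring_1 vec) \<in> carrier_vec n \<Longrightarrow> 0 \<cdot>\<^sub>v a = 0\<^sub>v n"
  by (intro eq_vecI) auto

lemma alg1:
  fixes qb ev a mu qv uu :: complex
  assumes "qb = ev * a" "qb = mu - ev * qv" "a = qv - ev * uu"
  shows "mu - ev^2 * uu = (2 * ev) * a"
proof -
  have m1: "mu = ev * a + ev * qv" using assms(1,2) by (simp add: algebra_simps)
  have qv: "qv = a + ev * uu" using assms(3) by simp
  have m2: "mu = ev * a + ev * (a + ev * uu)" using m1 qv by simp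
  show ?thesis unfolding m2 by (simp add: algebra_simps power2_eq_square)
qed

lemma zero_append_vec: "(0\<^sub>v (n + m) :: 'a::zero vec) = 0\<^sub>v n @\<^sub>v 0\<^sub>v m"
  by (rule eq_vecI) (auto simp: index_append_vec)

lemma smult_append_vec: "(k::'a::semiring_0) \<cdot>\<^sub>v (u @\<^sub>v v) = (k \<cdot>\<^sub>v u) @\<^sub>v (k \<cdot>\<^sub>v v)"
  by (rule eq_vecI) (auto simp: index_append_vec)

lemma complex_sq_real:
  fixes z :: complex
  assumes "z^2 \<in> \<real>" "Re (z^2) > 0"
  shows "z \<in> \<real> \<and> (Re z = sqrt (Re (z^2)) \<or> Re z = - sqrt (Re (z^2)))"
proof -
  have im: "Im (z^2) = 2 * Re z * Im z" by (simp add: power2_eq_square)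
  have re: "Re (z^2) = (Re z)^2 - (Im z)^2" by (simp add: power2_eq_square)
  have "Im (z^2) = 0" using assms(1) by (simp add: complex_is_Real_iff)
  then have "Re z = 0 \<or> Im z = 0" using im by simp
  moreover have "Re z \<noteq> 0" using assms(2) re by (auto simp: power2_eq_square)
  ultimately have imz: "Im z = 0" by simp
  then have "z \<in> \<real>" by (simp add: complex_is_Real_iff)
  moreover have "Re (z^2) = (Re z)^2" using re imz by simp
  then have "sqrt (Re (z^2)) = \<bar>Re z\<bar>" by simp
  ultimately show ?thesis by (auto simp: abs_if)
qed

lemma pointwise_a:
  fixes Q R :: "real mat"
  assumes Q: "Q \<in> carrier_mat n m" and R: "R \<in> carrier_mat m n"
    and dg: "diagonalizable (map_mat complex_of_real (Q * R))"
    and evs: "\<forall>\<mu>. eigenvalue (map_mat complex_of_real (Q * R)) \<mu> \<longrightarrow> \<mu> \<in> \<real> \<and> Re \<mu> > 0"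
  shows "diagonalizable (map_mat complex_of_real (block_P n m Q R)) \<and>
      (\<forall>ev. eigenvalue (map_mat complex_of_real (block_P n m Q R)) ev \<longrightarrow>
         ev \<in> \<real> \<and> (Re ev = 0 \<or> (\<exists>\<mu>. eigenvalue (map_mat complex_of_real (Q * R)) (complex_of_real \<mu>)
                                  \<and> (Re ev = sqrt \<mu> \<or> Re ev = - sqrt \<mu>))))"
proof -
  define Qc where "Qc = map_mat complex_of_real Q"
  define Rc where "Rc = map_mat complex_of_real R"
  define Mc where "Mc = map_mat complex_of_real (Q * R)"
  define Pc where "Pc = map_mat complex_of_real (block_P n m Q R)"
  have Qc: "Qc \<in> carrier_mat n m" and Rc: "Rc \<in> carrier_mat m n" unfolding Qc_def Rc_def using Q R by auto
  have Mc: "Mc \<in> carrier_mat n n" unfolding Mc_def using Q R by auto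
  have McQR: "Mc = Qc * Rc" unfolding Mc_def Qc_def Rc_def by (rule of_real_hom.mat_hom_mult[OF Q R])
  have Pc_eq: "Pc = four_block_mat (0\<^sub>m n n) Qc Rc (0\<^sub>m m m)"
    unfolding Pc_def block_P_def Qc_def Rc_def using Q R by (intro eq_matI) auto
  have Pc: "Pc \<in> carrier_mat (n + m) (n + m)" unfolding Pc_eq using Qc Rc by auto
  have Pmult: "Pc *\<^sub>v (u @\<^sub>v v) = (Qc *\<^sub>v v) @\<^sub>v (Rc *\<^sub>v u)" if u: "u \<in> carrier_vec n" and v: "v \<in> carrier_vec m" for u v
    unfolding Pc_eq using Qc Rc u v
    by (simp add: four_block_mat_mult_vec[OF zero_carrier_mat Qc Rc zero_carrier_mat u v] zero_mat_vec)
  have QRv: "Qc *\<^sub>v (Rc *\<^sub>v u) = Mc *\<^sub>v u" if u: "u \<in> carrier_vec n" for u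
    unfolding McQR using assoc_mult_mat_vec[OF Qc Rc u] by simp
  have Minj: "u = 0\<^sub>v n" if u: "u \<in> carrier_vec n" and Mu: "Mc *\<^sub>v u = 0\<^sub>v n" for u
  proof (rule ccontr)
    assume "u \<noteq> 0\<^sub>v n"
    then have "eigenvector Mc u 0" unfolding eigenvector_def using u Mu Mc by auto
    then have "eigenvalue Mc 0" unfolding eigenvalue_def by auto
    then show False using evs unfolding Mc_def by auto
  qed
  have kerP: "char_matrix Pc ev *\<^sub>v x = 0\<^sub>v (n + m)"
    if x: "x \<in> carrier_vec (n + m)" and xx: "char_matrix Pc ev *\<^sub>v (char_matrix Pc ev *\<^sub>v x) = 0\<^sub>v (n + m)" for ev x
  proof -
    define u where "u = vec_first x n"
    define v where "v = vec_last x m"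
    have u: "u \<in> carrier_vec n" and v: "v \<in> carrier_vec m" unfolding u_def v_def by auto
    have xuv: "x = u @\<^sub>v v" unfolding u_def v_def using x by simp
    have Xz: "char_matrix Pc ev *\<^sub>v (p @\<^sub>v q) = (Qc *\<^sub>v q + (- ev) \<cdot>\<^sub>v p) @\<^sub>v (Rc *\<^sub>v p + (- ev) \<cdot>\<^sub>v q)"
      if p: "p \<in> carrier_vec n" and q: "q \<in> carrier_vec m" for p q
      using char_mult_vec[OF Pc, of "p @\<^sub>v q" ev] p q Pmult[OF p q] Qc Rc
      by (simp add: smult_append_vec append_vec_add[of _ n _ _ m])
    define a where "a = Qc *\<^sub>v v + (- ev) \<cdot>\<^sub>v u"
    define b where "b = Rc *\<^sub>v u + (- ev) \<cdot>\<^sub>v v"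
    have a: "a \<in> carrier_vec n" and b: "b \<in> carrier_vec m" unfolding a_def b_def using Qc Rc u v by auto
    have y: "char_matrix Pc ev *\<^sub>v x = a @\<^sub>v b" unfolding xuv a_def b_def using Xz[OF u v] .
    have "(Qc *\<^sub>v b + (- ev) \<cdot>\<^sub>v a) @\<^sub>v (Rc *\<^sub>v a + (- ev) \<cdot>\<^sub>v b) = 0\<^sub>v n @\<^sub>v 0\<^sub>v m"
      using xx unfolding y Xz[OF a b] zero_append_vec .
    then have F1: "Qc *\<^sub>v b + (- ev) \<cdot>\<^sub>v a = 0\<^sub>v n" and F2: "Rc *\<^sub>v a + (- ev) \<cdot>\<^sub>v b = 0\<^sub>v m"
      using append_vec_eq[of "Qc *\<^sub>v b + (- ev) \<cdot>\<^sub>v a" n "0\<^sub>v n"] Qc b a by auto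
    have E1: "Qc *\<^sub>v b = Mc *\<^sub>v u + (- ev) \<cdot>\<^sub>v (Qc *\<^sub>v v)"
      unfolding b_def using mult_add_distrib_mat_vec[OF Qc, of "Rc *\<^sub>v u" "(- ev) \<cdot>\<^sub>v v"] Rc u v
        QRv[OF u] mult_mat_vec[OF Qc v] by simp
    have Ra: "Rc *\<^sub>v a = ev \<cdot>\<^sub>v b"
    proof (rule eq_vecI)
      fix i assume "i < dim_vec (ev \<cdot>\<^sub>v b)" then have i: "i < m" using b by simp
      show "(Rc *\<^sub>v a) $ i = (ev \<cdot>\<^sub>v b) $ i"
        using arg_cong[OF F2, of "\<lambda>z. z $ i"] i b Rc by simp
    qed (use Rc b in auto)
    have E2: "Mc *\<^sub>v a = ev \<cdot>\<^sub>v (Qc *\<^sub>v b)"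
      using QRv[OF a] Ra mult_mat_vec[OF Qc b] by simp
    have ab0: "a = 0\<^sub>v n \<and> b = 0\<^sub>v m"
    proof (cases "ev = 0")
      case True
      have "Qc *\<^sub>v b = 0\<^sub>v n" using F1 True Qc b a by (simp add: zero_smult_vec')
      moreover have "Qc *\<^sub>v v \<in> carrier_vec n" "Mc *\<^sub>v u \<in> carrier_vec n" using Qc v Mc u by auto
      ultimately have "Mc *\<^sub>v u = 0\<^sub>v n" using E1 True by (simp add: zero_smult_vec')
      then have "u = 0\<^sub>v n" using Minj[OF u] by simp
      then have b0: "b = 0\<^sub>v m" unfolding b_def using True Rc v by (simp add: mat_vec_zero zero_smult_vec')
      have "Mc *\<^sub>v a = 0\<^sub>v n" using E2 True Qc b by (simp add: zero_smult_vec')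
      then show ?thesis using Minj[OF a] b0 by simp
    next
      case False
      define w where "w = Mc *\<^sub>v u + (- (ev^2)) \<cdot>\<^sub>v u"
      have w2a: "w = (2 * ev) \<cdot>\<^sub>v a"
      proof (rule eq_vecI)
        fix i assume "i < dim_vec ((2 * ev) \<cdot>\<^sub>v a)" then have i: "i < n" using a by simp
        have f1: "(Qc *\<^sub>v b) $ i = ev * a $ i" using arg_cong[OF F1, of "\<lambda>z. z $ i"] i a Qc b by simp
        have e1: "(Qc *\<^sub>v b) $ i = (Mc *\<^sub>v u) $ i - ev * (Qc *\<^sub>v v) $ i"
          using arg_cong[OF E1, of "\<lambda>z. z $ i"] i Mc u Qc v by simp
        have ai: "a $ i = (Qc *\<^sub>v v) $ i - ev * u $ i" unfolding a_def using i Qc v u by simp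
        have "w $ i = (Mc *\<^sub>v u) $ i - ev^2 * u $ i" unfolding w_def using i Mc u by simp
        also have "\<dots> = (2 * ev) * a $ i" using alg1[OF f1 e1 ai] .
        finally show "w $ i = ((2 * ev) \<cdot>\<^sub>v a) $ i" using i a by simp
      qed (use a Mc u in \<open>auto simp: w_def\<close>)
      have "Mc *\<^sub>v w + (- (ev^2)) \<cdot>\<^sub>v w = 0\<^sub>v n"
      proof (rule eq_vecI)
        fix i assume "i < dim_vec (0\<^sub>v n :: complex vec)" then have i: "i < n" by simp
        have f1: "(Qc *\<^sub>v b) $ i = ev * a $ i" using arg_cong[OF F1, of "\<lambda>z. z $ i"] i a Qc b by simp
        have "(Mc *\<^sub>v w) $ i = 2 * ev * (Mc *\<^sub>v a) $ i" unfolding w2a using mult_mat_vec[OF Mc a] i Mc a by simp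
        also have "\<dots> = 2 * ev * (ev * (ev * a $ i))" using arg_cong[OF E2, of "\<lambda>z. z $ i"] f1 i Qc b by simp
        finally show "(Mc *\<^sub>v w + (- (ev^2)) \<cdot>\<^sub>v w) $ i = (0\<^sub>v n :: complex vec) $ i"
          using i Mc a unfolding w2a by (simp add: algebra_simps power2_eq_square)
      qed (use Mc a in \<open>auto simp: w2a\<close>)
      then have "w = 0\<^sub>v n" using diag_kernel[OF Mc dg[folded Mc_def] u w_def] by simp
      then have a0: "a = 0\<^sub>v n"
      proof -
        assume w0: "w = 0\<^sub>v n"
        show ?thesis
        proof (rule eq_vecI)
          fix i assume "i < dim_vec (0\<^sub>v n :: complex vec)" then have i: "i < n" by simp
          have "2 * ev * a $ i = 0" using arg_cong[OF w2a, of "\<lambda>z. z $ i"] w0 i a by simp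
          then show "a $ i = (0\<^sub>v n :: complex vec) $ i" using False i by simp
        qed (use a in auto)
      qed
      have "b = 0\<^sub>v m"
      proof (rule eq_vecI)
        fix i assume "i < dim_vec (0\<^sub>v m :: complex vec)" then have i: "i < m" by simp
        have "ev * b $ i = 0" using arg_cong[OF Ra, of "\<lambda>z. z $ i"] a0 i b Rc by (simp add: mat_vec_zero)
        then show "b $ i = (0\<^sub>v m :: complex vec) $ i" using False i by simp
      qed (use b in auto)
      then show ?thesis using a0 by simp
    qed
    then show ?thesis unfolding y zero_append_vec by simp
  qed
  have diagP: "diagonalizable Pc"
    by (rule diag_crit[OF Pc]) (rule kerP)
  have evP: "ev \<in> \<real> \<and> (Re ev = 0 \<or> (\<exists>\<mu>. eigenvalue Mc (complex_of_real \<mu>) \<and> (Re ev = sqrt \<mu> \<or> Re ev = - sqrt \<mu>)))"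
    if e: "eigenvalue Pc ev" for ev
  proof (cases "ev = 0")
    case True then show ?thesis by simp
  next
    case False
    obtain x where x: "x \<in> carrier_vec (n + m)" "x \<noteq> 0\<^sub>v (n + m)" "Pc *\<^sub>v x = ev \<cdot>\<^sub>v x"
      using e Pc unfolding eigenvalue_def eigenvector_def by auto
    define u where "u = vec_first x n"
    define v where "v = vec_last x m"
    have u: "u \<in> carrier_vec n" and v: "v \<in> carrier_vec m" unfolding u_def v_def by auto
    have xuv: "x = u @\<^sub>v v" unfolding u_def v_def using x by simp
    have "(Qc *\<^sub>v v) @\<^sub>v (Rc *\<^sub>v u) = (ev \<cdot>\<^sub>v u) @\<^sub>v (ev \<cdot>\<^sub>v v)"
      using x(3) unfolding xuv Pmult[OF u v] smult_append_vec .
    then have Qv: "Qc *\<^sub>v v = ev \<cdot>\<^sub>v u" and Ru: "Rc *\<^sub>v u = ev \<cdot>\<^sub>v v"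
      using append_vec_eq[of "Qc *\<^sub>v v" n "ev \<cdot>\<^sub>v u"] Qc v u by auto
    have u0: "u \<noteq> 0\<^sub>v n"
    proof
      assume u0: "u = 0\<^sub>v n"
      have "v = 0\<^sub>v m"
      proof (rule eq_vecI)
        fix i assume "i < dim_vec (0\<^sub>v m :: complex vec)" then have i: "i < m" by simp
        have "ev * v $ i = 0" using arg_cong[OF Ru, of "\<lambda>z. z $ i"] u0 i v Rc by (simp add: mat_vec_zero)
        then show "v $ i = (0\<^sub>v m :: complex vec) $ i" using False i by simp
      qed (use v in auto)
      then show False using x(2) xuv u0 zero_append_vec by metis
    qed
    have "Mc *\<^sub>v u = (ev^2) \<cdot>\<^sub>v u"
      using QRv[OF u] Ru mult_mat_vec[OF Qc v] Qv by (simp add: power2_eq_square smult_smult_assoc)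
    then have "eigenvector Mc u (ev^2)" unfolding eigenvector_def using u u0 Mc by auto
    then have eM: "eigenvalue Mc (ev^2)" unfolding eigenvalue_def by auto
    then have "ev^2 \<in> \<real> \<and> Re (ev^2) > 0" using evs unfolding Mc_def by auto
    then have cs: "ev \<in> \<real> \<and> (Re ev = sqrt (Re (ev^2)) \<or> Re ev = - sqrt (Re (ev^2)))"
      using complex_sq_real by blast
    have "complex_of_real (Re (ev^2)) = ev^2" using \<open>ev^2 \<in> \<real> \<and> _\<close> by (simp add: complex_is_Real_iff complex_eq_iff)
    then have "eigenvalue Mc (complex_of_real (Re (ev^2)))" using eM by simp
    then show ?thesis using cs by blast
  qed
  show ?thesis using diagP evP unfolding Pc_def Mc_def by blast
qed


lemma sm_minus:
  assumes A: "smooth_mat_on S r c A" and B: "smooth_mat_on S r c B"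
  shows "smooth_mat_on S r c (\<lambda>k. A k - B k)"
proof (rule sm_intro)
  fix k assume k: "k \<in> S" then show "A k - B k \<in> carrier_mat r c"
    using sm_carrier[OF A k] sm_carrier[OF B k] by auto
next
  fix i j assume ij: "i < r" "j < c"
  have "smooth_on S (\<lambda>k. A k $$ (i,j) + (-1) * B k $$ (i,j))"
    by (intro smooth_on_add smooth_on_mult smooth_on_const sm_entry[OF A] sm_entry[OF B]) (use ij in auto)
  then show "smooth_on S (\<lambda>k. (A k - B k) $$ (i,j))"
  proof (rule smooth_on_cong)
    fix k assume k: "k \<in> S"
    show "A k $$ (i,j) + (-1) * B k $$ (i,j) = (A k - B k) $$ (i,j)"
      using ij sm_carrier[OF A k] sm_carrier[OF B k] by auto
  qed
qed

lemma sm_mkH: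
  assumes Q: "smooth_mat_on S n m Q" and R: "smooth_mat_on S m n R" and H1: "smooth_mat_on S n n H1"
  shows "smooth_mat_on S (n + m) (n + m) (\<lambda>k. mkH n m (Q k) (R k) (H1 k))"
proof -
  have M: "smooth_mat_on S n n (\<lambda>k. Q k * R k)" by (rule sm_mult[OF Q R])
  have A: "smooth_mat_on S n n (\<lambda>k. H1 k * (Q k * R k))" by (rule sm_mult[OF H1 M])
  have Pi: "smooth_mat_on S m m (\<lambda>k. Determinant.det (Q k * R k) \<cdot>\<^sub>m 1\<^sub>m m - R k * adj_mat (Q k * R k) * Q k)"
    by (rule sm_minus[OF sm_smult[OF sm_one sm_det[OF M]] sm_mult[OF sm_mult[OF R sm_adj[OF M]] Q]])
  have B: "smooth_mat_on S m m (\<lambda>k. mkB n m (Q k) (R k) (H1 k))"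
    unfolding mkB_def Let_def
    by (rule sm_add[OF sm_mult[OF sm_mult[OF sm_transpose[OF Q] H1] Q] sm_mult[OF sm_transpose[OF Pi] Pi]])
  show ?thesis unfolding mkH_def
    by (rule sm_four_block[OF A sm_zero sm_zero B])
qed

theorem lemma1:
  fixes n m :: nat and Q R :: "real \<times> real \<times> real \<Rightarrow> real mat"
  assumes "1 \<le> n" and "n \<le> m"
    and "smooth_mat_on S2 n m Q" and "smooth_mat_on S2 m n R"
  shows "(\<forall>k\<in>S2.
            diagonalizable (map_mat complex_of_real (Q k * R k)) \<and>
            (\<forall>\<mu>. eigenvalue (map_mat complex_of_real (Q k * R k)) \<mu> \<longrightarrow> \<mu> \<in> \<real> \<and> Re \<mu> > 0)
          \<longrightarrow> diagonalizable (map_mat complex_of_real (block_P n m (Q k) (R k))) \<and>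
              (\<forall>ev. eigenvalue (map_mat complex_of_real (block_P n m (Q k) (R k))) ev \<longrightarrow>
                  ev \<in> \<real> \<and>
                  (Re ev = 0 \<or> (\<exists>\<mu>. eigenvalue (map_mat complex_of_real (Q k * R k)) (complex_of_real \<mu>)
                                  \<and> (Re ev = sqrt \<mu> \<or> Re ev = - sqrt \<mu>)))))
       \<and> ((\<exists>H1. smooth_mat_on S2 n n H1 \<and>
              (\<forall>k\<in>S2. pos_def_mat n (H1 k) \<and>
                       H1 k * (Q k * R k) = transpose_mat (Q k * R k) * H1 k \<and>
                       pos_def_mat n (H1 k * (Q k * R k))))
          \<longrightarrow> (\<exists>H. smooth_mat_on S2 (n + m) (n + m) H \<and>
                 (\<forall>k\<in>S2. pos_def_mat (n + m) (H k) \<and>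
                          H k * block_P n m (Q k) (R k) = transpose_mat (block_P n m (Q k) (R k)) * H k)))"
proof (intro conjI ballI impI)
  fix k assume k: "k \<in> S2"
    and h: "diagonalizable (map_mat complex_of_real (Q k * R k)) \<and>
            (\<forall>\<mu>. eigenvalue (map_mat complex_of_real (Q k * R k)) \<mu> \<longrightarrow> \<mu> \<in> \<real> \<and> Re \<mu> > 0)"
  have Qk: "Q k \<in> carrier_mat n m" and Rk: "R k \<in> carrier_mat m n"
    using sm_carrier[OF assms(3) k] sm_carrier[OF assms(4) k] .
  note pa = pointwise_a[OF Qk Rk conjunct1[OF h] conjunct2[OF h]]
  show "diagonalizable (map_mat complex_of_real (block_P n m (Q k) (R k)))" using pa by blast
  show "\<forall>ev. eigenvalue (map_mat complex_of_real (block_P n m (Q k) (R k))) ev \<longrightarrow>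
                  ev \<in> \<real> \<and>
                  (Re ev = 0 \<or> (\<exists>\<mu>. eigenvalue (map_mat complex_of_real (Q k * R k)) (complex_of_real \<mu>)
                                  \<and> (Re ev = sqrt \<mu> \<or> Re ev = - sqrt \<mu>)))" using pa by blast
next
  assume "\<exists>H1. smooth_mat_on S2 n n H1 \<and>
              (\<forall>k\<in>S2. pos_def_mat n (H1 k) \<and>
                       H1 k * (Q k * R k) = transpose_mat (Q k * R k) * H1 k \<and>
                       pos_def_mat n (H1 k * (Q k * R k)))"
  then obtain H1 where H1: "smooth_mat_on S2 n n H1"
    and H1k: "\<forall>k\<in>S2. pos_def_mat n (H1 k) \<and>
                       H1 k * (Q k * R k) = transpose_mat (Q k * R k) * H1 k \<and>
                       pos_def_mat n (H1 k * (Q k * R k))" by blast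
  show "\<exists>H. smooth_mat_on S2 (n + m) (n + m) H \<and>
                 (\<forall>k\<in>S2. pos_def_mat (n + m) (H k) \<and>
                          H k * block_P n m (Q k) (R k) = transpose_mat (block_P n m (Q k) (R k)) * H k)"
  proof (intro exI conjI ballI)
    show "smooth_mat_on S2 (n + m) (n + m) (\<lambda>k. mkH n m (Q k) (R k) (H1 k))"
      by (rule sm_mkH[OF assms(3) assms(4) H1])
    fix k assume k: "k \<in> S2"
    have Qk: "Q k \<in> carrier_mat n m" and Rk: "R k \<in> carrier_mat m n"
      using sm_carrier[OF assms(3) k] sm_carrier[OF assms(4) k] .
    note pb = pointwise_b[OF Qk Rk, of "H1 k"]
    show "pos_def_mat (n + m) (mkH n m (Q k) (R k) (H1 k))" using pb H1k k by blast
    show "mkH n m (Q k) (R k) (H1 k) * block_P n m (Q k) (R k) = transpose_mat (block_P n m (Q k) (R k)) * mkH n m (Q k) (R k) (H1 k)"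
      using pb H1k k by blast
  qed
qed

end
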